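(* Let $X\in\mathbb{R}^{n\times p}$ be a fixed design matrix with $X^\top X$ invertible, and $y=X\beta+\varepsilon$ with $\mathbb{E}\varepsilon=0$ and $\mathrm{Cov}(\varepsilon)=\gamma^2I_n$. Let $G$ be a compact group acting linearly on $\mathbb{R}^p$ (each $g$ an invertible $p\times p$ matrix) with Haar probability measure $\mathbb{Q}$, and assume $g^\top\beta=\beta$ for all $g\in G$. Define $\hat\beta_{\mathrm{ERM}}=(X^\top X)^{-1}X^\top y$, $\hat\beta_{\mathrm{aDIST}}=\mathbb{E}_{g\sim\mathbb{Q}}\big[((Xg^\top)^\top Xg^\top)^{-1}(Xg^\top)^\top y\big]$, $\hat\beta_{\mathrm{cERM}}=\arg\min_b\|y-Xb\|_2^2$ subject to $(g^\top-I_p)b=0$ for all $g\in G$, and let $r_{\mathrm{ERM}},r_{\mathrm{aDIST}},r_{\mathrm{cERM}}$ be their risks $\mathbb{E}\|\hat\beta-\beta\|_2^2$. Then: 1. With $v_j$ the orthonormal eigenvectors of $X^\top X$, $d_j^2$ the corresponding eigenvalues, and $\mathcal{G}=\mathbb{E}_{g\sim\mathbb{Q}}[g]$: $r_{\mathrm{ERM}}=\gamma^2\operatorname{tr}[(X^\top X)^{-1}]=\gamma^2\sum_{j=1}^pd_j^{-2}$ and $r_{\mathrm{aDIST}}=\gamma^2\sum_{j=1}^pd_j^{-2}\|\mathcal{G}^\top v_j\|_2^2$. 2. If $G$ acts orthogonally, then $r_{\mathrm{aDIST}}\le r_{\mathrm{ERM}}$. 3. If $G$ is the group of all permutations of the coordinates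 $\{1,\dots,p\}$, then $r_{\mathrm{aDIST}}=\gamma^2p^{-1}1_p^\top(X^\top X)^{-1}1_p$ and $r_{\mathrm{cERM}}=\gamma^2p\,(1_p^\top X^\top X1_p)^{-1}$; if furthermore $X^\top X=I_p$, then $r_{\mathrm{ERM}}=p\gamma^2$ and $r_{\mathrm{aDIST}}=r_{\mathrm{cERM}}=\gamma^2$.
   Context: $Xg^\top$ is the design matrix whose rows are $gx_i$, where $x_i^\top$ are the rows of $X$. $1_p$ is the all-ones vector in $\mathbb{R}^p$. *)

theory Defs
  imports "HOL-Probability.Probability"
begin

text \<open>Design matrix X :: real^'p^'n (n rows, p columns). Matrices act on column vectors via *v.\<close>

definition beta_ERM :: "real^'p^'n \<Rightarrow> real^'n \<Rightarrow> real^'p" where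
  "beta_ERM X y = (matrix_inv (transpose X ** X) ** transpose X) *v y"

definition beta_aDIST :: "real^'p^'n \<Rightarrow> (real^'p^'p) measure \<Rightarrow> real^'n \<Rightarrow> real^'p" where
  "beta_aDIST X Q y =
     (\<integral>g. (matrix_inv (transpose (X ** transpose g) ** (X ** transpose g))
              ** transpose (X ** transpose g)) *v y \<partial>Q)"

definition invariant_subspace :: "(real^'p^'p) set \<Rightarrow> (real^'p) set" where
  "invariant_subspace G = {b. \<forall>g\<in>G. (transpose g - mat 1) *v b = 0}"

definition beta_cERM :: "real^'p^'n \<Rightarrow> (real^'p^'p) set \<Rightarrow> real^'n \<Rightarrow> real^'p" where
  "beta_cERM X G y = arg_min_on (\<lambda>b. (norm (y - X *v b))\<^sup>2) (invariant_subspace G)"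

definition risk :: "'a measure \<Rightarrow> ('a \<Rightarrow> real^'p) \<Rightarrow> real^'p \<Rightarrow> real" where
  "risk M est \<beta> = (\<integral>\<omega>. (norm (est \<omega> - \<beta>))\<^sup>2 \<partial>M)"

definition compact_matrix_group :: "(real^'p^'p) set \<Rightarrow> bool" where
  "compact_matrix_group G \<longleftrightarrow> compact G \<and> mat 1 \<in> G \<and>
     (\<forall>g\<in>G. invertible g \<and> matrix_inv g \<in> G) \<and> (\<forall>g\<in>G. \<forall>h\<in>G. g ** h \<in> G)"

definition haar_probability :: "(real^'p^'p) measure \<Rightarrow> (real^'p^'p) set \<Rightarrow> bool" where
  "haar_probability Q G \<longleftrightarrow> prob_space Q \<and> space Q = G \<and>
     sets Q = sets (restrict_space borel G) \<and>
     (\<forall>g\<in>G. distr Q Q (\<lambda>h. g ** h) = Q)"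

definition perm_matrices :: "(real^'p^'p) set" where
  "perm_matrices = {P. \<exists>\<sigma>. \<sigma> permutes (UNIV::'p set) \<and> P = (\<chi> i j. if i = \<sigma> j then 1 else 0)}"

definition ones :: "real^'p" where "ones = (\<chi> i. 1)"

end

theory Submission
  imports Defs
begin

lemma bl_rmul: "bounded_linear (\<lambda>A::real^'n^'m. A ** (C::real^'k^'n))"
  unfolding linear_conv_bounded_linear[symmetric]
  by (rule linearI) (simp_all add: matrix_matrix_mult_def vec_eq_iff sum.distrib sum_distrib_left algebra_simps)
lemma bl_lmul: "bounded_linear (\<lambda>A::real^'k^'n. (C::real^'n^'m) ** A)"
  unfolding linear_conv_bounded_linear[symmetric]
  by (rule linearI) (simp_all add: matrix_matrix_mult_def vec_eq_iff sum.distrib sum_distrib_left algebra_simps)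
lemma bl_tv: "bounded_linear (\<lambda>A::real^'n^'m. transpose A *v x)"
  unfolding linear_conv_bounded_linear[symmetric]
  by (rule linearI) (simp_all add: transpose_def matrix_vector_mult_def vec_eq_iff sum.distrib sum_distrib_left algebra_simps)
lemma bl_v: "bounded_linear (\<lambda>A::real^'n^'m. A *v x)"
  unfolding linear_conv_bounded_linear[symmetric]
  by (rule linearI) (simp_all add: matrix_vector_mult_def vec_eq_iff sum.distrib sum_distrib_left algebra_simps)
lemma bl_comp: "bounded_linear (\<lambda>A::real^'n^'m. A $ i $ j)"
  unfolding linear_conv_bounded_linear[symmetric]
  by (rule linearI) simp_all
lemma bl_tr: "bounded_linear (\<lambda>A::real^'n^'m. transpose A)"
  unfolding linear_conv_bounded_linear[symmetric]
  by (rule linearI) (simp_all add: transpose_def vec_eq_iff)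

lemma minv_r: "invertible (A::real^'n^'n) \<Longrightarrow> A ** matrix_inv A = mat 1"
  unfolding invertible_def matrix_inv_def by (metis (mono_tags, lifting) someI_ex)
lemma minv_l: "invertible (A::real^'n^'n) \<Longrightarrow> matrix_inv A ** A = mat 1"
  unfolding invertible_def matrix_inv_def by (metis (mono_tags, lifting) someI_ex)
lemma minv_unique: "invertible (A::real^'n^'n) \<Longrightarrow> A ** B = mat 1 \<Longrightarrow> matrix_inv A = B"
  by (metis matrix_mul_assoc matrix_mul_lid matrix_mul_rid minv_l)
lemma minv_inv: "invertible (A::real^'n^'n) \<Longrightarrow> invertible (matrix_inv A)"
  using minv_l minv_r invertible_def by blast
lemma minv_minv: "invertible (A::real^'n^'n) \<Longrightarrow> matrix_inv (matrix_inv A) = A"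
  by (simp add: minv_inv minv_l minv_unique)
lemma minv_mult: "invertible (A::real^'n^'n) \<Longrightarrow> invertible (B::real^'n^'n) \<Longrightarrow> matrix_inv (A ** B) = matrix_inv B ** matrix_inv A"
  apply (rule minv_unique)
  apply (simp add: invertible_mult)
  by (metis matrix_mul_assoc matrix_mul_rid minv_r)
lemma inv_transpose: "invertible (A::real^'n^'n) \<Longrightarrow> invertible (transpose A)"
  by (metis invertible_def matrix_transpose_mul transpose_mat)
lemma minv_transpose: "invertible (A::real^'n^'n) \<Longrightarrow> matrix_inv (transpose A) = transpose (matrix_inv A)"
  apply (rule minv_unique)
  apply (simp add: inv_transpose)
  by (metis matrix_transpose_mul minv_l transpose_mat)
lemma orth_norm: "orthogonal_matrix (A::real^'n^'n) \<Longrightarrow> norm (A *v x) = norm x"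
proof -
  assume "orthogonal_matrix A"
  then have "transpose A ** A = mat 1" by (simp add: orthogonal_matrix)
  then have "(A *v x) \<bullet> (A *v x) = x \<bullet> x"
    by (metis dot_lmul_matrix matrix_vector_mul_assoc matrix_vector_mul_lid vector_transpose_matrix)
  then show ?thesis by (simp add: norm_eq_sqrt_inner)
qed
lemma cont_mult: "continuous_on S (\<lambda>z::(real^'n^'n) \<times> (real^'n^'n). fst z ** snd z)"
  unfolding matrix_matrix_mult_def
  by (intro continuous_intros)

lemma minv_cont:
  fixes G :: "(real^'n^'n) set"
  assumes G: "compact_matrix_group G"
  shows "continuous_on G matrix_inv"
proof -
  have cG: "compact G" and inv: "\<And>g. g \<in> G \<Longrightarrow> invertible g \<and> matrix_inv g \<in> G"
    using G by (auto simp: compact_matrix_group_def)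
  have eq: "(\<lambda>x. Pair x (matrix_inv x)) ` G = (G \<times> G) \<inter> {z. fst z ** snd z = mat 1}"
  proof
    show "(\<lambda>x. Pair x (matrix_inv x)) ` G \<subseteq> (G \<times> G) \<inter> {z. fst z ** snd z = mat 1}"
    proof (rule image_subsetI)
      fix x assume x: "x \<in> G"
      then show "(x, matrix_inv x) \<in> (G \<times> G) \<inter> {z. fst z ** snd z = mat 1}"
        using inv[OF x] minv_r[of x] using [[show_types]] apply simp done
    qed
    show "(G \<times> G) \<inter> {z. fst z ** snd z = mat 1} \<subseteq> (\<lambda>x. Pair x (matrix_inv x)) ` G"
    proof
      fix z assume z: "z \<in> (G \<times> G) \<inter> {z. fst z ** snd z = mat 1}"
      then have "snd z = matrix_inv (fst z)" using inv[of "fst z"] minv_unique[of "fst z" "snd z"] by auto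
      then show "z \<in> (\<lambda>x. Pair x (matrix_inv x)) ` G" using z by (intro image_eqI[of _ _ "fst z"]) auto
    qed
  qed
  have cl: "closed {z::(real^'n^'n) \<times> (real^'n^'n). fst z ** snd z = mat 1}"
    by (rule closed_Collect_eq) (intro cont_mult continuous_intros)+
  have "closedin (top_of_set (G \<times> G)) ((\<lambda>x. Pair x (matrix_inv x)) ` G)"
    unfolding eq using cl by (simp add: closedin_closed_Int)
  then show ?thesis
    using continuous_closed_graph_eq[OF cG, of matrix_inv G] inv by (simp add: Pi_iff)
qed
lemma haar_facts:
  fixes G :: "(real^'n^'n) set" and Q :: "(real^'n^'n) measure"
  assumes G: "compact_matrix_group G" and Q: "haar_probability Q G"
  shows "integrable Q (\<lambda>g. g)" "integrable Q matrix_inv"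
    "(\<integral>g. matrix_inv g \<partial>Q) = (\<integral>g. g \<partial>Q)"
    "\<And>g. g \<in> G \<Longrightarrow> g ** (\<integral>g. g \<partial>Q) = (\<integral>g. g \<partial>Q)"
    "\<And>g. g \<in> G \<Longrightarrow> (\<integral>g. g \<partial>Q) ** g = (\<integral>g. g \<partial>Q)"
proof -
  have cG: "compact G" and inv: "\<And>g. g \<in> G \<Longrightarrow> invertible g \<and> matrix_inv g \<in> G"
    and mul: "\<And>g h. g \<in> G \<Longrightarrow> h \<in> G \<Longrightarrow> g ** h \<in> G"
    using G by (auto simp: compact_matrix_group_def)
  have PQ: "prob_space Q" and sp: "space Q = G" and sets: "sets Q = sets (restrict_space borel G)"
    and linv: "\<And>g. g \<in> G \<Longrightarrow> distr Q Q (\<lambda>h. g ** h) = Q"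
    using Q by (auto simp: haar_probability_def)
  interpret prob_space Q by (rule PQ)
  have meas: "f \<in> borel_measurable Q" if "continuous_on G f" for f :: "real^'n^'n \<Rightarrow> real^'n^'n"
    unfolding measurable_cong_sets[OF sets refl] by (rule borel_measurable_continuous_on_restrict[OF that])
  obtain B where B: "\<And>g. g \<in> G \<Longrightarrow> norm g \<le> B"
    using compact_imp_bounded[OF cG] by (auto simp: bounded_iff)
  show intI: "integrable Q (\<lambda>g. g)"
    by (rule integrable_const_bound[where B=B]) (auto simp: sp B intro!: meas continuous_intros)
  show intM: "integrable Q matrix_inv"
    by (rule integrable_const_bound[where B=B]) (auto simp: sp B inv intro!: meas minv_cont[OF G])
  define GG where "GG = (\<integral>g. g \<partial>Q)"
  define H where "H = (\<integral>g. matrix_inv g \<partial>Q)"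
  have Tmeas: "(\<lambda>h. g ** h) \<in> measurable Q Q" if g: "g \<in> G" for g
  proof -
    have "(\<lambda>h. g ** h) \<in> borel \<rightarrow>\<^sub>M borel"
      by (rule borel_measurable_continuous_onI) (simp add: linear_continuous_on bl_lmul)
    then have "(\<lambda>h. g ** h) \<in> restrict_space borel G \<rightarrow>\<^sub>M restrict_space borel G"
      by (rule measurable_restrict_space3) (use mul g in auto)
    then show ?thesis using measurable_cong_sets[OF sets sets] by simp
  qed
  have shift: "(\<integral>h. f h \<partial>Q) = (\<integral>h. f (g ** h) \<partial>Q)"
    if g: "g \<in> G" and f: "f \<in> borel_measurable Q" for g and f :: "real^'n^'n \<Rightarrow> real^'n^'n"
  proof -
    have "(\<integral>h. f h \<partial>Q) = (\<integral>h. f h \<partial>(distr Q Q (\<lambda>h. g ** h)))" using linv[OF g] by simp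
    also have "\<dots> = (\<integral>h. f (g ** h) \<partial>Q)" by (rule integral_distr[OF Tmeas[OF g] f])
    finally show ?thesis .
  qed
  have Gl: "g ** GG = GG" if g: "g \<in> G" for g
  proof -
    have "GG = (\<integral>h. g ** h \<partial>Q)" unfolding GG_def
      by (rule shift[OF g]) (auto intro!: meas continuous_intros)
    also have "\<dots> = g ** GG" unfolding GG_def by (rule integral_bounded_linear[OF bl_lmul intI])
    finally show ?thesis by simp
  qed
  have Hr: "H ** matrix_inv g = H" if g: "g \<in> G" for g
  proof -
    have "H = (\<integral>h. matrix_inv (g ** h) \<partial>Q)" unfolding H_def
      by (rule shift[OF g]) (auto intro!: meas minv_cont[OF G])
    also have "\<dots> = (\<integral>h. matrix_inv h ** matrix_inv g \<partial>Q)"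
      using g by (intro Bochner_Integration.integral_cong) (auto simp: sp inv minv_mult)
    also have "\<dots> = H ** matrix_inv g" unfolding H_def by (rule integral_bounded_linear[OF bl_rmul intM])
    finally show ?thesis by simp
  qed
  have Hr': "H ** g = H" if g: "g \<in> G" for g
    using Hr[of "matrix_inv g"] inv g minv_minv by metis
  have "H ** GG = (\<integral>h. H ** h \<partial>Q)" unfolding GG_def by (rule integral_bounded_linear[OF bl_lmul intI, symmetric])
  also have "\<dots> = (\<integral>h. H \<partial>Q)" by (intro Bochner_Integration.integral_cong) (auto simp: sp Hr')
  also have "\<dots> = H" by (simp add: prob_space)
  finally have 1: "H ** GG = H" .
  have "H ** GG = (\<integral>h. matrix_inv h ** GG \<partial>Q)" unfolding H_def by (rule integral_bounded_linear[OF bl_rmul intM, symmetric])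
  also have "\<dots> = (\<integral>h. GG \<partial>Q)" by (intro Bochner_Integration.integral_cong) (auto simp: sp Gl inv)
  also have "\<dots> = GG" by (simp add: prob_space)
  finally have 2: "H ** GG = GG" .
  show HG: "(\<integral>g. matrix_inv g \<partial>Q) = (\<integral>g. g \<partial>Q)" using 1 2 unfolding H_def GG_def by simp
  show "\<And>g. g \<in> G \<Longrightarrow> g ** (\<integral>g. g \<partial>Q) = (\<integral>g. g \<partial>Q)" using Gl unfolding GG_def by simp
  show "\<And>g. g \<in> G \<Longrightarrow> (\<integral>g. g \<partial>Q) ** g = (\<integral>g. g \<partial>Q)" using Hr' HG unfolding H_def by simp
qed
lemma norm_sq_expand:
  fixes B :: "real^'n^'q" and e :: "real^'n"
  shows "(norm (B *v e))\<^sup>2 = (\<Sum>i\<in>UNIV. \<Sum>k\<in>UNIV. \<Sum>l\<in>UNIV. (B$i$k * B$i$l) * (e$k * e$l))"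
proof -
  have "(norm (B *v e))\<^sup>2 = (\<Sum>i\<in>UNIV. (B *v e)$i * (B *v e)$i)"
    by (simp add: power2_norm_eq_inner inner_vec_def)
  also have "\<dots> = (\<Sum>i\<in>UNIV. \<Sum>k\<in>UNIV. \<Sum>l\<in>UNIV. (B$i$k * B$i$l) * (e$k * e$l))"
    by (simp add: matrix_vector_mult_def sum_product mult_ac)
  finally show ?thesis .
qed

lemma quad_risk:
  fixes \<epsilon> :: "'a \<Rightarrow> real^'n" and B :: "real^'n^'q"
  assumes eps_int2: "\<And>i j. integrable M (\<lambda>\<omega>. \<epsilon> \<omega> $ i * \<epsilon> \<omega> $ j)"
    and eps_cov: "\<And>i j. (\<integral>\<omega>. \<epsilon> \<omega> $ i * \<epsilon> \<omega> $ j \<partial>M) = (if i = j then \<gamma>\<^sup>2 else 0)"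
  shows "integrable M (\<lambda>\<omega>. (norm (B *v \<epsilon> \<omega>))\<^sup>2)"
    "(\<integral>\<omega>. (norm (B *v \<epsilon> \<omega>))\<^sup>2 \<partial>M) = \<gamma>\<^sup>2 * (\<Sum>i\<in>UNIV. \<Sum>k\<in>UNIV. (B$i$k)\<^sup>2)"
proof -
  show "integrable M (\<lambda>\<omega>. (norm (B *v \<epsilon> \<omega>))\<^sup>2)"
    unfolding norm_sq_expand by (simp add: eps_int2)
  have "(\<integral>\<omega>. (norm (B *v \<epsilon> \<omega>))\<^sup>2 \<partial>M) =
     (\<Sum>i\<in>UNIV. \<Sum>k\<in>UNIV. \<Sum>l\<in>UNIV. (B$i$k * B$i$l) * (\<integral>\<omega>. \<epsilon> \<omega> $ k * \<epsilon> \<omega> $ l \<partial>M))"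
    unfolding norm_sq_expand
    by (simp add: integral_sum integrable_sum integrable_mult_right eps_int2)
  also have "\<dots> = (\<Sum>i\<in>UNIV. \<Sum>k\<in>UNIV. (B$i$k)\<^sup>2 * \<gamma>\<^sup>2)"
    by (simp add: eps_cov power2_eq_square if_distrib cong: if_cong)
  finally show "(\<integral>\<omega>. (norm (B *v \<epsilon> \<omega>))\<^sup>2 \<partial>M) = \<gamma>\<^sup>2 * (\<Sum>i\<in>UNIV. \<Sum>k\<in>UNIV. (B$i$k)\<^sup>2)"
    by (simp add: sum_distrib_left sum_distrib_right mult_ac)
qed
lemma frob_trace: "(\<Sum>i\<in>UNIV. \<Sum>k\<in>UNIV. ((B::real^'n^'q)$i$k)\<^sup>2) = trace (B ** transpose B)"
  by (simp add: trace_def matrix_matrix_mult_def transpose_def power2_eq_square)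

lemma dot_transpose: "(x::real^'n) \<bullet> (transpose A *v y) = (A *v x) \<bullet> y"
  by (metis dot_lmul_matrix inner_commute transpose_matrix_vector)

lemma trace_onb:
  fixes v :: "'n \<Rightarrow> real^'n" and M :: "real^'n^'n"
  assumes onb: "\<And>i j. v i \<bullet> v j = (if i = j then 1 else 0)"
  shows "trace M = (\<Sum>j\<in>UNIV. v j \<bullet> (M *v v j))"
proof -
  define V :: "real^'n^'n" where "V = (\<chi> i j. v j $ i)"
  have "transpose V ** V = mat 1"
    using onb by (simp add: V_def matrix_matrix_mult_def transpose_def mat_def inner_vec_def vec_eq_iff)
  then have VV: "V ** transpose V = mat 1" by (rule matrix_left_right_inverse1)
  have "trace M = trace ((M ** V) ** transpose V)" by (simp add: matrix_mul_assoc[symmetric] VV)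
  also have "\<dots> = trace (transpose V ** (M ** V))" by (rule trace_mul_sym)
  also have "\<dots> = (\<Sum>j\<in>UNIV. v j \<bullet> (M *v v j))"
    by (simp add: trace_def V_def matrix_matrix_mult_def transpose_def inner_vec_def matrix_vector_mult_def sum_distrib_left mult_ac)
  finally show ?thesis .
qed

lemma dot_smult_r: "(x::real^'n) \<bullet> (c *s y) = c * (x \<bullet> y)"
  by (simp add: inner_vec_def sum_distrib_left mult_ac)
lemma dot_smult_l: "(c *s x) \<bullet> (y::real^'n) = c * (x \<bullet> y)"
  by (simp add: inner_vec_def sum_distrib_left mult_ac)


definition Pm :: "'p \<Rightarrow> 'p \<Rightarrow> real^'p^'p" where
  "Pm a b = (\<chi> i j. if i = Transposition.transpose a b j then 1 else 0)"

lemma Pm_in: "Pm a b \<in> perm_matrices"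
  unfolding perm_matrices_def Pm_def using permutes_swap_id[of a UNIV b] by auto

lemma Pm_left: "(Pm a b ** M) $ a $ j = M $ b $ j"
proof -
  have "(Pm a b ** M) $ a $ j = (\<Sum>k\<in>UNIV. (if a = Transposition.transpose a b k then 1 else 0) * M $ k $ j)"
    by (simp add: Pm_def matrix_matrix_mult_def)
  also have "\<dots> = (\<Sum>k\<in>UNIV. (if k = b then M $ k $ j else 0))"
    by (rule sum.cong[OF refl]) (auto simp: Transposition.transpose_def)
  finally show ?thesis by simp
qed

lemma Pm_right: "(M ** Pm a b) $ i $ a = M $ i $ b"
proof -
  have "(M ** Pm a b) $ i $ a = (\<Sum>k\<in>UNIV. M $ i $ k * (if k = Transposition.transpose a b a then 1 else 0))"
    by (simp add: Pm_def matrix_matrix_mult_def)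
  also have "\<dots> = (\<Sum>k\<in>UNIV. (if k = b then M $ i $ k else 0))"
    by (rule sum.cong[OF refl]) auto
  finally show ?thesis by simp
qed

lemma perm_colsum: "P \<in> perm_matrices \<Longrightarrow> (\<Sum>i\<in>UNIV. P $ i $ j) = 1"
  unfolding perm_matrices_def by auto

lemma perm_tv: "\<sigma> permutes UNIV \<Longrightarrow> (transpose (\<chi> i j. if i = \<sigma> j then 1 else 0) *v (b::real^'p)) $ i = b $ \<sigma> i"
proof -
  have "(transpose (\<chi> i j. if i = \<sigma> j then 1 else 0) *v b) $ i = (\<Sum>k\<in>UNIV. (if k = \<sigma> i then 1 else 0) * b $ k)"
    by (simp add: Finite_Cartesian_Product.transpose_def matrix_vector_mult_def)
  also have "\<dots> = (\<Sum>k\<in>UNIV. (if k = \<sigma> i then b $ k else 0))"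
    by (rule sum.cong[OF refl]) auto
  finally show ?thesis by simp
qed

lemma inv_perm: "b \<in> invariant_subspace (perm_matrices :: (real^'p^'p) set) \<longleftrightarrow> (\<forall>i j. b $ i = (b::real^'p) $ j)"
proof
  assume b: "b \<in> invariant_subspace (perm_matrices :: (real^'p^'p) set)"
  show "\<forall>i j. b $ i = b $ j"
  proof (intro allI)
    fix i j :: 'p
    have "(transpose (Pm i j) - mat 1) *v b = 0" using b Pm_in unfolding invariant_subspace_def by blast
    then have "transpose (Pm i j) *v b = b" by (simp add: matrix_vector_mult_diff_rdistrib)
    then have "(transpose (Pm i j) *v b) $ i = b $ i" by simp
    moreover have "(transpose (Pm i j) *v b) $ i = b $ j"
      unfolding Pm_def by (subst perm_tv) (auto intro: permutes_swap_id)
    ultimately show "b $ i = b $ j" by simp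
  qed
next
  assume c: "\<forall>i j. b $ i = b $ j"
  show "b \<in> invariant_subspace (perm_matrices :: (real^'p^'p) set)"
    unfolding invariant_subspace_def
  proof (intro CollectI ballI)
    fix P :: "real^'p^'p" assume "P \<in> perm_matrices"
    then obtain \<sigma> where s: "\<sigma> permutes UNIV" and P: "P = (\<chi> i j. if i = \<sigma> j then 1 else 0)"
      unfolding perm_matrices_def by blast
    show "(transpose P - mat 1) *v b = 0"
      unfolding matrix_vector_mult_diff_rdistrib vec_eq_iff
    proof
      fix i
      have "(transpose P *v b) $ i = b $ \<sigma> i" unfolding P by (rule perm_tv[OF s])
      then show "(transpose P *v b - mat 1 *v b) $ i = 0 $ i" using c by simp
    qed
  qed
qed
lemma line_sq:
  fixes y u :: "real^'n"
  assumes "u \<bullet> u \<noteq> 0" and ts_def: "ts = (u \<bullet> y) / (u \<bullet> u)"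
  shows "(norm (y - t *s u))\<^sup>2 = (norm (y - ts *s u))\<^sup>2 + (t - ts)\<^sup>2 * (u \<bullet> u)"
proof -
  have "ts * (u \<bullet> u) = u \<bullet> y" using assms by (simp add: ts_def)
  then show ?thesis
    unfolding power2_norm_eq_inner scalar_mult_eq_scaleR
    by (simp add: inner_diff_left inner_diff_right power2_eq_square inner_commute algebra_simps)
qed

lemma cERM_formula:
  fixes X :: "real^'p^'n" and y :: "real^'n"
  assumes u: "(X *v ones) \<bullet> (X *v ones) \<noteq> 0"
  shows "beta_cERM X perm_matrices y = (((X *v ones) \<bullet> y) / ((X *v ones) \<bullet> (X *v ones))) *s ones"
proof -
  define u where "u = X *v ones"
  define ts where "ts = (u \<bullet> y) / (u \<bullet> u)"
  define f where "f = (\<lambda>b. (norm (y - X *v b))\<^sup>2)"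
  define S where "S = invariant_subspace (perm_matrices :: (real^'p^'p) set)"
  have uu: "u \<bullet> u \<noteq> 0" using u u_def by simp
  have memS: "b \<in> S \<longleftrightarrow> (\<exists>t. b = t *s ones)" for b
    unfolding S_def inv_perm by (auto simp: ones_def vec_eq_iff)
  have ft: "f (t *s ones) = f (ts *s ones) + (t - ts)\<^sup>2 * (u \<bullet> u)" for t
    unfolding f_def vector_scalar_commute u_def[symmetric] by (rule line_sq[OF uu ts_def])
  have upos: "u \<bullet> u > 0" using uu by (simp add: order_le_neq_trans[OF inner_ge_zero] )
  have "arg_min_on f S = ts *s ones"
    unfolding arg_min_on_def arg_min_def is_arg_min_def
  proof (rule some_equality)
    show "ts *s ones \<in> S \<and> \<not> (\<exists>y. y \<in> S \<and> f y < f (ts *s ones))"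
    proof
      show "ts *s ones \<in> S" using memS by blast
      show "\<not> (\<exists>y. y \<in> S \<and> f y < f (ts *s ones))"
      proof
        assume "\<exists>y. y \<in> S \<and> f y < f (ts *s ones)"
        then obtain z where z: "z \<in> S" "f z < f (ts *s ones)" by blast
        then obtain t where "z = t *s ones" using memS by blast
        then have "f z = f (ts *s ones) + (t - ts)\<^sup>2 * (u \<bullet> u)" using ft[of t] by simp
        moreover have "(t - ts)\<^sup>2 * (u \<bullet> u) \<ge> 0" using upos by simp
        ultimately show False using z by linarith
      qed
    qed
    fix b assume b: "b \<in> S \<and> \<not> (\<exists>y. y \<in> S \<and> f y < f b)"
    then obtain t where t: "b = t *s ones" using memS by blast
    show "b = ts *s ones"
    proof (rule ccontr)
      assume "b \<noteq> ts *s ones"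
      then have "t \<noteq> ts" using t by auto
      then have "(t - ts)\<^sup>2 * (u \<bullet> u) > 0" using upos by simp
      then have "f (ts *s ones) < f b" using ft[of t] unfolding t by linarith
      then show False using b memS by blast
    qed
  qed
  then show ?thesis unfolding beta_cERM_def f_def S_def ts_def u_def by simp
qed

theorem proposition5p4:
  fixes X :: "real^'p^'n" and \<beta> :: "real^'p" and \<gamma> :: real
    and M :: "'a measure" and \<epsilon> :: "'a \<Rightarrow> real^'n"
    and G :: "(real^'p^'p) set" and Q :: "(real^'p^'p) measure"
  assumes XtX_inv: "invertible (transpose X ** X)"
    and M: "prob_space M"
    and eps_meas: "\<epsilon> \<in> borel_measurable M"
    and eps_int: "\<And>i. integrable M (\<lambda>\<omega>. \<epsilon> \<omega> $ i)"
    and eps_mean: "\<And>i. (\<integral>\<omega>. \<epsilon> \<omega> $ i \<partial>M) = 0"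
    and eps_int2: "\<And>i j. integrable M (\<lambda>\<omega>. \<epsilon> \<omega> $ i * \<epsilon> \<omega> $ j)"
    and eps_cov: "\<And>i j. (\<integral>\<omega>. \<epsilon> \<omega> $ i * \<epsilon> \<omega> $ j \<partial>M) = (if i = j then \<gamma>\<^sup>2 else 0)"
    and G: "compact_matrix_group G"
    and Q: "haar_probability Q G"
    and beta_inv: "\<And>g. g \<in> G \<Longrightarrow> transpose g *v \<beta> = \<beta>"
  defines "r_ERM \<equiv> risk M (\<lambda>\<omega>. beta_ERM X (X *v \<beta> + \<epsilon> \<omega>)) \<beta>"
    and "r_aDIST \<equiv> risk M (\<lambda>\<omega>. beta_aDIST X Q (X *v \<beta> + \<epsilon> \<omega>)) \<beta>"
    and "r_cERM \<equiv> risk M (\<lambda>\<omega>. beta_cERM X G (X *v \<beta> + \<epsilon> \<omega>)) \<beta>"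
    and "\<G> \<equiv> (\<integral>g. g \<partial>Q)"
  shows
    "(\<forall>(v :: 'p \<Rightarrow> real^'p) (d :: 'p \<Rightarrow> real).
        (\<forall>i j. v i \<bullet> v j = (if i = j then 1 else 0)) \<and>
        (\<forall>j. (transpose X ** X) *v v j = (d j)\<^sup>2 *s v j) \<longrightarrow>
        r_ERM = \<gamma>\<^sup>2 * trace (matrix_inv (transpose X ** X)) \<and>
        \<gamma>\<^sup>2 * trace (matrix_inv (transpose X ** X)) = \<gamma>\<^sup>2 * (\<Sum>j\<in>UNIV. 1 / (d j)\<^sup>2) \<and>
        r_aDIST = \<gamma>\<^sup>2 * (\<Sum>j\<in>UNIV. (norm (transpose \<G> *v v j))\<^sup>2 / (d j)\<^sup>2))
     \<and> ((\<forall>g\<in>G. orthogonal_matrix g) \<longrightarrow> r_aDIST \<le> r_ERM)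
     \<and> (G = perm_matrices \<longrightarrow>
          r_aDIST = \<gamma>\<^sup>2 / real CARD('p) * (ones \<bullet> (matrix_inv (transpose X ** X) *v ones)) \<and>
          r_cERM = \<gamma>\<^sup>2 * real CARD('p) / (ones \<bullet> ((transpose X ** X) *v ones)) \<and>
          (transpose X ** X = mat 1 \<longrightarrow>
             r_ERM = real CARD('p) * \<gamma>\<^sup>2 \<and> r_aDIST = \<gamma>\<^sup>2 \<and> r_cERM = \<gamma>\<^sup>2))"
proof -
  define K where "K = transpose X ** X"
  define S where "S = matrix_inv K"
  define W where "W = S ** transpose X"
  define A where "A = transpose \<G>"
  have invG: "\<And>g. g \<in> G \<Longrightarrow> invertible g \<and> matrix_inv g \<in> G"
    using G by (auto simp: compact_matrix_group_def)
  have Kinv: "invertible K" using XtX_inv K_def by simp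
  have SK: "S ** K = mat 1" and KS: "K ** S = mat 1"
    using minv_l[OF Kinv] minv_r[OF Kinv] S_def by auto
  have KT: "transpose K = K" by (simp add: K_def matrix_transpose_mul)
  have ST: "transpose S = S" using minv_transpose[OF Kinv] KT S_def by metis
  have WX: "W ** X = mat 1" using SK by (simp add: W_def K_def matrix_mul_assoc)
  have WWT: "W ** transpose W = S"
  proof -
    have "W ** transpose W = S ** (transpose X ** X) ** transpose S"
      by (simp add: W_def matrix_transpose_mul matrix_mul_assoc)
    also have "\<dots> = S" using SK ST by (simp add: K_def)
    finally show ?thesis .
  qed
  note hf = haar_facts[OF G Q]
  have spQ: "space Q = G" using Q by (simp add: haar_probability_def)
  interpret Qp: prob_space Q using Q by (simp add: haar_probability_def)
  have erm: "beta_ERM X (X *v \<beta> + \<epsilon> \<omega>) - \<beta> = W *v \<epsilon> \<omega>" for \<omega>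
    by (simp add: beta_ERM_def W_def[symmetric] S_def[symmetric] K_def[symmetric] matrix_vector_right_distrib
        matrix_vector_mul_assoc WX)
  have rERM: "r_ERM = \<gamma>\<^sup>2 * trace S"
    unfolding r_ERM_def risk_def erm quad_risk(2)[OF eps_int2 eps_cov] frob_trace WWT ..
  have integrand: "(matrix_inv (transpose (X ** transpose g) ** (X ** transpose g)) ** transpose (X ** transpose g)) *v y
      = transpose (matrix_inv g) *v (W *v y)" if g: "g \<in> G" for g y
  proof -
    have ig: "invertible g" and itg: "invertible (transpose g)" using invG[OF g] inv_transpose by auto
    have "transpose (X ** transpose g) ** (X ** transpose g) = g ** K ** transpose g"
      by (simp add: K_def matrix_transpose_mul matrix_mul_assoc)
    then have "matrix_inv (transpose (X ** transpose g) ** (X ** transpose g)) = matrix_inv (transpose g) ** S ** matrix_inv g"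
      using ig itg Kinv by (simp add: minv_mult invertible_mult S_def matrix_mul_assoc)
    then have "matrix_inv (transpose (X ** transpose g) ** (X ** transpose g)) ** transpose (X ** transpose g)
        = transpose (matrix_inv g) ** S ** (matrix_inv g ** g) ** transpose X"
      using ig by (simp add: matrix_transpose_mul matrix_mul_assoc minv_transpose)
    also have "\<dots> = transpose (matrix_inv g) ** W" using minv_l[OF ig] by (simp add: W_def matrix_mul_assoc)
    finally show ?thesis by (simp add: matrix_vector_mul_assoc)
  qed
  have HG: "(\<integral>g. transpose (matrix_inv g) *v z \<partial>Q) = A *v z" for z
    using integral_bounded_linear[OF bl_tv hf(2), of z] hf(3) by (simp add: A_def \<G>_def)
  have Abeta: "A *v \<beta> = \<beta>"
  proof -
    have "A *v \<beta> = (\<integral>g. transpose (matrix_inv g) *v \<beta> \<partial>Q)" by (rule HG[symmetric])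
    also have "\<dots> = (\<integral>g. \<beta> \<partial>Q)"
    proof (intro Bochner_Integration.integral_cong refl)
      fix g assume "g \<in> space Q"
      then have "matrix_inv g \<in> G" using invG spQ by auto
      then show "transpose (matrix_inv g) *v \<beta> = \<beta>" by (rule beta_inv)
    qed
    also have "\<dots> = \<beta>" by (simp add: Qp.prob_space)
    finally show ?thesis .
  qed
  have adist: "beta_aDIST X Q (X *v \<beta> + \<epsilon> \<omega>) - \<beta> = (A ** W) *v \<epsilon> \<omega>" for \<omega>
  proof -
    have "beta_aDIST X Q (X *v \<beta> + \<epsilon> \<omega>) = (\<integral>g. transpose (matrix_inv g) *v (W *v (X *v \<beta> + \<epsilon> \<omega>)) \<partial>Q)"
      unfolding beta_aDIST_def
      by (intro Bochner_Integration.integral_cong) (auto simp: spQ integrand)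
    also have "\<dots> = A *v (W *v (X *v \<beta> + \<epsilon> \<omega>))" by (rule HG)
    also have "\<dots> = \<beta> + (A ** W) *v \<epsilon> \<omega>"
      by (simp add: matrix_vector_right_distrib matrix_vector_mul_assoc WX Abeta)
    finally show ?thesis by simp
  qed
  have rAD: "r_aDIST = \<gamma>\<^sup>2 * trace (A ** S ** transpose A)"
  proof -
    have "r_aDIST = \<gamma>\<^sup>2 * trace ((A ** W) ** transpose (A ** W))"
      unfolding r_aDIST_def risk_def adist quad_risk(2)[OF eps_int2 eps_cov] frob_trace ..
    also have "(A ** W) ** transpose (A ** W) = A ** (W ** transpose W) ** transpose A"
      by (simp add: matrix_transpose_mul matrix_mul_assoc)
    finally show ?thesis by (simp add: WWT)
  qed
  have part1: "(\<forall>(v :: 'p \<Rightarrow> real^'p) (d :: 'p \<Rightarrow> real).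
        (\<forall>i j. v i \<bullet> v j = (if i = j then 1 else 0)) \<and>
        (\<forall>j. (transpose X ** X) *v v j = (d j)\<^sup>2 *s v j) \<longrightarrow>
        r_ERM = \<gamma>\<^sup>2 * trace (matrix_inv (transpose X ** X)) \<and>
        \<gamma>\<^sup>2 * trace (matrix_inv (transpose X ** X)) = \<gamma>\<^sup>2 * (\<Sum>j\<in>UNIV. 1 / (d j)\<^sup>2) \<and>
        r_aDIST = \<gamma>\<^sup>2 * (\<Sum>j\<in>UNIV. (norm (transpose \<G> *v v j))\<^sup>2 / (d j)\<^sup>2))"
  proof (intro allI impI)
    fix v :: "'p \<Rightarrow> real^'p" and d :: "'p \<Rightarrow> real"
    assume H: "(\<forall>i j. v i \<bullet> v j = (if i = j then 1 else 0)) \<and>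
        (\<forall>j. (transpose X ** X) *v v j = (d j)\<^sup>2 *s v j)"
    have onb: "\<And>i j. v i \<bullet> v j = (if i = j then 1 else 0)" using H by blast
    have eig: "\<And>j. K *v v j = (d j)\<^sup>2 *s v j" using H K_def by blast
    have Sv: "S *v v j = (1 / (d j)\<^sup>2) *s v j" for j
    proof -
      have "v j = S *v (K *v v j)" by (simp add: matrix_vector_mul_assoc SK)
      also have "\<dots> = (d j)\<^sup>2 *s (S *v v j)" by (simp add: eig vector_scalar_commute)
      finally have e: "v j = (d j)\<^sup>2 *s (S *v v j)" .
      have dn: "d j \<noteq> 0"
      proof
        assume "d j = 0"
        then have "v j = 0" using e by (simp add: vec_eq_iff)
        then show False using onb[of j j] by simp
      qed
      show ?thesis using e dn by (simp add: vec_eq_iff field_simps)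
    qed
    have tS: "trace S = (\<Sum>j\<in>UNIV. 1 / (d j)\<^sup>2)"
      by (simp add: trace_onb[OF onb] Sv dot_smult_r onb)
    have tA: "trace (A ** S ** transpose A) = (\<Sum>j\<in>UNIV. (norm (A *v v j))\<^sup>2 / (d j)\<^sup>2)"
    proof -
      have "trace (A ** S ** transpose A) = trace ((S ** transpose A) ** A)"
        by (metis matrix_mul_assoc trace_mul_sym)
      also have "\<dots> = (\<Sum>j\<in>UNIV. v j \<bullet> (((S ** transpose A) ** A) *v v j))" by (rule trace_onb[OF onb])
      also have "\<dots> = (\<Sum>j\<in>UNIV. (norm (A *v v j))\<^sup>2 / (d j)\<^sup>2)"
      proof (rule sum.cong[OF refl])
        fix j
        have "v j \<bullet> (((S ** transpose A) ** A) *v v j) = v j \<bullet> (transpose S *v (transpose A *v (A *v v j)))"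
          by (simp add: matrix_vector_mul_assoc ST matrix_mul_assoc)
        also have "\<dots> = (S *v v j) \<bullet> (transpose A *v (A *v v j))" by (rule dot_transpose)
        also have "\<dots> = (1 / (d j)\<^sup>2) * (v j \<bullet> (transpose A *v (A *v v j)))" by (simp add: Sv dot_smult_l)
        also have "\<dots> = (1 / (d j)\<^sup>2) * ((A *v v j) \<bullet> (A *v v j))" by (simp only: dot_transpose)
        also have "\<dots> = (norm (A *v v j))\<^sup>2 / (d j)\<^sup>2" by (simp add: power2_norm_eq_inner)
        finally show "v j \<bullet> (((S ** transpose A) ** A) *v v j) = (norm (A *v v j))\<^sup>2 / (d j)\<^sup>2" .
      qed
      finally show ?thesis .
    qed
    show "r_ERM = \<gamma>\<^sup>2 * trace (matrix_inv (transpose X ** X)) \<and>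
        \<gamma>\<^sup>2 * trace (matrix_inv (transpose X ** X)) = \<gamma>\<^sup>2 * (\<Sum>j\<in>UNIV. 1 / (d j)\<^sup>2) \<and>
        r_aDIST = \<gamma>\<^sup>2 * (\<Sum>j\<in>UNIV. (norm (transpose \<G> *v v j))\<^sup>2 / (d j)\<^sup>2)"
      unfolding K_def[symmetric] S_def[symmetric] A_def[symmetric] using rERM rAD tS tA by simp
  qed
  have part2: "((\<forall>g\<in>G. orthogonal_matrix g) \<longrightarrow> r_aDIST \<le> r_ERM)"
  proof
    assume orth: "\<forall>g\<in>G. orthogonal_matrix g"
    have Anorm: "norm (A *v u) \<le> norm u" for u
    proof -
      have "A *v u = (\<integral>g. transpose g *v u \<partial>Q)"
        using integral_bounded_linear[OF bl_tv hf(1), of u] by (simp only: A_def \<G>_def)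
      also have "norm \<dots> \<le> (\<integral>g. norm (transpose g *v u) \<partial>Q)" by (rule integral_norm_bound)
      also have "\<dots> = (\<integral>g. norm u \<partial>Q)"
      proof (intro Bochner_Integration.integral_cong refl)
        fix g assume "g \<in> space Q"
        then have "orthogonal_matrix (transpose g)" using orth spQ orthogonal_matrix_transpose by auto
        then show "norm (transpose g *v u) = norm u" by (rule orth_norm)
      qed
      also have "\<dots> = norm u" by (simp add: Qp.prob_space)
      finally show ?thesis .
    qed
    have "(\<integral>\<omega>. (norm ((A ** W) *v \<epsilon> \<omega>))\<^sup>2 \<partial>M) \<le> (\<integral>\<omega>. (norm (W *v \<epsilon> \<omega>))\<^sup>2 \<partial>M)"
    proof (rule integral_mono)
      show "integrable M (\<lambda>\<omega>. (norm ((A ** W) *v \<epsilon> \<omega>))\<^sup>2)" by (rule quad_risk(1)[OF eps_int2 eps_cov])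
      show "integrable M (\<lambda>\<omega>. (norm (W *v \<epsilon> \<omega>))\<^sup>2)" by (rule quad_risk(1)[OF eps_int2 eps_cov])
      fix \<omega>
      show "(norm ((A ** W) *v \<epsilon> \<omega>))\<^sup>2 \<le> (norm (W *v \<epsilon> \<omega>))\<^sup>2"
        unfolding matrix_vector_mul_assoc[symmetric] by (rule power_mono[OF Anorm norm_ge_zero])
    qed
    then show "r_aDIST \<le> r_ERM" unfolding r_aDIST_def r_ERM_def risk_def adist erm .
  qed
  have part3: "(G = perm_matrices \<longrightarrow>
          r_aDIST = \<gamma>\<^sup>2 / real CARD('p) * (ones \<bullet> (matrix_inv (transpose X ** X) *v ones)) \<and>
          r_cERM = \<gamma>\<^sup>2 * real CARD('p) / (ones \<bullet> ((transpose X ** X) *v ones)) \<and>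
          (transpose X ** X = mat 1 \<longrightarrow>
             r_ERM = real CARD('p) * \<gamma>\<^sup>2 \<and> r_aDIST = \<gamma>\<^sup>2 \<and> r_cERM = \<gamma>\<^sup>2))"
  proof
    assume GP: "G = perm_matrices"
    obtain a0 :: 'p where True by simp
    define p where "p = real CARD('p)"
    have ppos: "p > 0" by (simp add: p_def)
    have colc: "\<G> $ i $ j = \<G> $ k $ j" for i k j
    proof -
      have "Pm i k \<in> G" using GP Pm_in by simp
      then have "Pm i k ** \<G> = \<G>" using hf(4) unfolding \<G>_def by blast
      then show ?thesis using Pm_left[of i k \<G> j] by simp
    qed
    have rowc: "\<G> $ i $ j = \<G> $ i $ k" for i j k
    proof -
      have "Pm j k \<in> G" using GP Pm_in by simp
      then have "\<G> ** Pm j k = \<G>" using hf(5) unfolding \<G>_def by blast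
      then show ?thesis using Pm_right[of \<G> j k i] by simp
    qed
    have colsum: "(\<Sum>i\<in>UNIV. \<G> $ i $ j) = 1" for j
    proof -
      have "(\<Sum>i\<in>UNIV. \<G> $ i $ j) = (\<Sum>i\<in>UNIV. \<integral>g. g $ i $ j \<partial>Q)"
        unfolding \<G>_def using integral_bounded_linear[OF bl_comp hf(1)] by simp
      also have "\<dots> = (\<integral>g. (\<Sum>i\<in>UNIV. g $ i $ j) \<partial>Q)"
      proof -
        have ij: "\<And>i. integrable Q (\<lambda>g. g $ i $ j)"
          using integrable_bounded_linear[OF bl_comp hf(1)] by simp
        show ?thesis by (subst Bochner_Integration.integral_sum) (auto intro: ij)
      qed
      also have "\<dots> = (\<integral>g. 1 \<partial>Q)"
        by (intro Bochner_Integration.integral_cong refl) (auto simp: spQ GP perm_colsum)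
      also have "\<dots> = 1" by (simp add: Qp.prob_space)
      finally show ?thesis .
    qed
    have Gc: "\<G> $ i $ j = 1 / p" for i j
    proof -
      have "(\<Sum>k\<in>UNIV. \<G> $ k $ j) = (\<Sum>k\<in>(UNIV::'p set). \<G> $ i $ j)"
        by (intro sum.cong refl colc)
      also have "\<dots> = p * \<G> $ i $ j" by (simp add: p_def)
      finally show ?thesis using colsum[of j] ppos by (simp add: field_simps)
    qed
    have AJ: "A = (\<chi> i j. 1 / p)"
      by (simp add: A_def vec_eq_iff Finite_Cartesian_Product.transpose_def Gc)
    have trA: "trace (A ** S ** transpose A) = (ones \<bullet> (S *v ones)) / p"
    proof -
      have "trace (A ** S ** transpose A) = (\<Sum>i\<in>(UNIV::'p set). (\<Sum>k\<in>UNIV. \<Sum>l\<in>UNIV. S $ k $ l) / p / p)"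
        by (simp add: AJ trace_def matrix_matrix_mult_def Finite_Cartesian_Product.transpose_def
            sum_divide_distrib sum_distrib_left sum_distrib_right) (rule sum.swap)
      also have "\<dots> = (\<Sum>k\<in>UNIV. \<Sum>l\<in>UNIV. S $ k $ l) / p"
        using ppos by (simp add: p_def)
      also have "(\<Sum>k\<in>UNIV. \<Sum>l\<in>UNIV. S $ k $ l) = ones \<bullet> (S *v ones)"
        by (simp add: ones_def inner_vec_def matrix_vector_mult_def)
      finally show ?thesis .
    qed
    have rA3: "r_aDIST = \<gamma>\<^sup>2 / p * (ones \<bullet> (S *v ones))"
      using rAD trA by simp
    define u where "u = X *v ones"
    define uu where "uu = u \<bullet> u"
    have uu0: "uu \<noteq> 0"
    proof
      assume "uu = 0"
      then have "u = 0" by (simp add: uu_def)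
      then have "K *v ones = 0" by (simp add: K_def u_def matrix_vector_mul_assoc[symmetric])
      then have "S *v (K *v ones) = 0" by simp
      then have "ones = (0::real^'p)" by (simp add: matrix_vector_mul_assoc SK)
      then show False by (simp add: ones_def vec_eq_iff)
    qed
    have Kones: "ones \<bullet> (K *v ones) = uu"
      unfolding K_def uu_def u_def matrix_vector_mul_assoc[symmetric] by (rule dot_transpose)
    have binv: "\<beta> \<in> invariant_subspace (perm_matrices :: (real^'p^'p) set)"
      unfolding invariant_subspace_def using beta_inv GP by (auto simp: matrix_vector_mult_diff_rdistrib)
    define t0 where "t0 = \<beta> $ a0"
    have bc: "\<beta> = t0 *s ones" using binv unfolding inv_perm by (auto simp: t0_def ones_def vec_eq_iff)
    define Bc :: "real^'n^'p" where "Bc = (\<chi> i k. u $ k / uu)"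
    have cerm: "beta_cERM X G (X *v \<beta> + \<epsilon> \<omega>) - \<beta> = Bc *v \<epsilon> \<omega>" for \<omega>
    proof -
      have "u \<bullet> (X *v \<beta> + \<epsilon> \<omega>) = t0 * uu + u \<bullet> \<epsilon> \<omega>"
        by (simp add: bc vector_scalar_commute u_def[symmetric] inner_add_right dot_smult_r uu_def)
      then have "beta_cERM X G (X *v \<beta> + \<epsilon> \<omega>) = ((t0 * uu + u \<bullet> \<epsilon> \<omega>) / uu) *s ones"
        using cERM_formula[of X] uu0 GP by (simp add: u_def uu_def)
      also have "\<dots> - \<beta> = Bc *v \<epsilon> \<omega>"
        using uu0 by (simp add: bc Bc_def vec_eq_iff ones_def matrix_vector_mult_def inner_vec_def
            field_simps sum_divide_distrib)
      finally show ?thesis .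
    qed
    have rc: "r_cERM = \<gamma>\<^sup>2 * p / uu"
    proof -
      have "r_cERM = \<gamma>\<^sup>2 * (\<Sum>i\<in>UNIV. \<Sum>k\<in>UNIV. (Bc$i$k)\<^sup>2)"
        unfolding r_cERM_def risk_def cerm by (rule quad_risk(2)[OF eps_int2 eps_cov])
      also have "(\<Sum>i\<in>UNIV. \<Sum>k\<in>UNIV. (Bc$i$k)\<^sup>2) = p * (uu / uu\<^sup>2)"
        by (simp add: Bc_def p_def uu_def inner_vec_def power_divide sum_divide_distrib power2_eq_square)
      also have "uu / uu\<^sup>2 = 1 / uu" using uu0 by (simp add: power2_eq_square)
      finally show ?thesis by simp
    qed
    show "r_aDIST = \<gamma>\<^sup>2 / real CARD('p) * (ones \<bullet> (matrix_inv (transpose X ** X) *v ones)) \<and>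
          r_cERM = \<gamma>\<^sup>2 * real CARD('p) / (ones \<bullet> ((transpose X ** X) *v ones)) \<and>
          (transpose X ** X = mat 1 \<longrightarrow>
             r_ERM = real CARD('p) * \<gamma>\<^sup>2 \<and> r_aDIST = \<gamma>\<^sup>2 \<and> r_cERM = \<gamma>\<^sup>2)"
      unfolding K_def[symmetric] S_def[symmetric] p_def[symmetric]
    proof (intro conjI impI)
      show "r_aDIST = \<gamma>\<^sup>2 / p * (ones \<bullet> (S *v ones))" by (rule rA3)
      show "r_cERM = \<gamma>\<^sup>2 * p / (ones \<bullet> (K *v ones))" using rc Kones by simp
      assume K1: "K = mat 1"
      have S1: "S = mat 1" unfolding S_def using minv_unique[OF Kinv] K1 by simp
      have oo: "ones \<bullet> (ones :: real^'p) = p" by (simp add: ones_def inner_vec_def p_def)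
      show "r_ERM = p * \<gamma>\<^sup>2" using rERM S1 by (simp add: trace_I p_def)
      show "r_aDIST = \<gamma>\<^sup>2" using rA3 S1 oo ppos by simp
      show "r_cERM = \<gamma>\<^sup>2" using rc Kones K1 oo ppos by simp
    qed
  qed
  from part1 part2 part3 show ?thesis by blast
qed

end
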